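(* Let $c\in(0,\infty)$, $\lambda_\pm=(1\pm c^{-1/2})^2$, and for $x>\lambda_+$ let $$\mathcal T(x)=\frac{x-(1+c^{-1})-\sqrt{(x-\lambda_+)(x-\lambda_-)}}{2c^{-1}}.$$ Let $d_1>d_2>\dots>d_s>c^{-1/4}$, $p(d)=\frac{(d^2+1)(d^2+c^{-1})}{d^2}$, $p_i=p(d_i)$, and $T^s(x)=\prod_{i=1}^s(\mathcal T(x)-d_i^{-2})$. Then: (1) the equation $T^s(x)=0$ ($x>\lambda_+$) has $s$ solutions, namely $p_1,\dots,p_s$; (2) $T^s$ has $s-1$ critical points $x_1,\dots,x_{s-1}$ with $x_i\in(p_{i+1},p_i)$, $i=1,\dots,s-1$; (3) $\mathcal T$ is strictly decreasing on $(\lambda_+,\infty)$.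
   Context: $\mathcal T(x)$ equals $x\,m_{1c}(x)m_{2c}(x)$, where $m_{1c},m_{2c}$ are the Stieltjes transforms of the limiting (Marchenko–Pastur) spectral distributions of $XX^*$ and $X^*X$ with aspect ratio $N/M\to c$. *)

theory Defs
  imports "HOL-Analysis.Analysis"
begin

definition lam_plus :: "real \<Rightarrow> real" where
  "lam_plus c = (1 + 1 / sqrt c)^2"

definition lam_minus :: "real \<Rightarrow> real" where
  "lam_minus c = (1 - 1 / sqrt c)^2"

definition calT :: "real \<Rightarrow> real \<Rightarrow> real" where
  "calT c x = (x - (1 + 1 / c) - sqrt ((x - lam_plus c) * (x - lam_minus c))) / (2 * (1 / c))"

definition pfun :: "real \<Rightarrow> real \<Rightarrow> real" where
  "pfun c d = (d^2 + 1) * (d^2 + 1 / c) / d^2"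

definition Ts :: "real \<Rightarrow> (nat \<Rightarrow> real) \<Rightarrow> nat \<Rightarrow> real \<Rightarrow> real" where
  "Ts c d s x = (\<Prod>i=1..s. calT c x - 1 / (d i)^2)"

end

theory Submission imports Defs "HOL-Computational_Algebra.Polynomial" begin

lemma basics:
  assumes "0 < c" defines "b \<equiv> 1 / sqrt c"
  shows "0 < b" "lam_plus c = (1+b)^2" "lam_minus c = (1-b)^2" "1/c = b^2"
  using assms by (auto simp: lam_plus_def lam_minus_def power_divide)

lemma T_at:
  assumes c: "0 < c" and bu: "1 / sqrt c < u"
  defines "b \<equiv> 1 / sqrt c"
  shows "calT c (u + 1 + b^2 + b^2/u) = 1/u \<and> lam_plus c < u + 1 + b^2 + b^2/u"
proof -
  note B = basics[OF c, folded b_def]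
  have ub: "b < u" using bu b_def by simp
  have u0: "0 < u" using ub B(1) by linarith
  have bb: "b^2/u < u" using ub B(1) u0
    by (simp add: divide_less_eq power2_eq_square mult_strict_mono)
  have q: "(u + 1 + b^2 + b^2/u - (1+b)^2) * (u + 1 + b^2 + b^2/u - (1-b)^2) = (u - b^2/u)^2"
    using u0 by (simp add: field_simps power2_eq_square)
  have sq: "sqrt ((u - b^2/u)^2) = u - b^2/u" using bb by simp
  have "calT c (u + 1 + b^2 + b^2/u) = (b^2/u + b^2/u) / (2 * b^2)"
    unfolding calT_def B(2,3,4) q sq by simp
  also have "\<dots> = 1/u" using B(1) u0 by (simp add: field_simps)
  finally have 1: "calT c (u + 1 + b^2 + b^2/u) = 1/u" .
  have "(1+b)^2 < u + 1 + b^2 + b^2/u"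
  proof -
    have "0 < (u - b)^2 / u" using ub u0 by simp
    moreover have "(u - b)^2 / u = u - 2*b + b^2/u" using u0 by (simp add: field_simps power2_eq_square)
    ultimately show ?thesis by (simp add: power2_eq_square algebra_simps)
  qed
  with 1 B(2) show ?thesis by simp
qed

lemma calT_deriv:
  assumes c: "0 < c" and x: "lam_plus c < x"
  shows "\<exists>y. (calT c has_real_derivative y) (at x) \<and> y < 0"
proof -
  define b where "b = 1 / sqrt c"
  note B = basics[OF c, folded b_def]
  define q where "q = (\<lambda>x. (x - (1+b)^2) * (x - (1-b)^2))"
  have lt: "(1-b)^2 < (1+b)^2" using B(1) by (simp add: power2_eq_square algebra_simps)
  have A: "0 < x - (1+b)^2" using x B(2) by simp
  have Bq: "0 < x - (1-b)^2" using A lt by simp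
  have q0: "0 < q x" unfolding q_def using A Bq by simp
  have eq: "calT c = (\<lambda>x. (x - (1 + b^2) - sqrt (q x)) / (2 * b^2))"
    unfolding calT_def q_def B(2,3,4) by (rule ext) simp
  define q' where "q' = (x - (1-b)^2) + (x - (1+b)^2)"
  have dq: "(q has_real_derivative q') (at x)" unfolding q_def q'_def
    by (auto intro!: derivative_eq_intros)
  have dT: "(calT c has_real_derivative (1 - q' / (2 * sqrt (q x))) / (2*b^2)) (at x)"
  proof -
    have ds: "((\<lambda>x. sqrt (q x)) has_real_derivative (inverse (sqrt (q x)) / 2 * q')) (at x)"
      using DERIV_chain2[OF DERIV_real_sqrt[OF q0] dq] .
    have l: "((\<lambda>x. x - (1 + b^2)) has_real_derivative 1) (at x)"
      by (auto intro!: derivative_eq_intros)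
    have "((\<lambda>x. (x - (1 + b^2) - sqrt (q x)) / (2 * b^2)) has_real_derivative
           (1 - inverse (sqrt (q x)) / 2 * q') / (2 * b^2)) (at x)"
      using DERIV_cdivide[OF DERIV_diff[OF l ds]] .
    moreover have "inverse (sqrt (q x)) / 2 * q' = q' / (2 * sqrt (q x))"
      by (simp add: field_simps)
    ultimately show ?thesis unfolding eq by (simp add: mult.commute)
  qed
  have key: "2 * sqrt (q x) < q'"
  proof -
    have "(2 * sqrt (q x))^2 = 4 * q x" using q0 by (simp add: power2_eq_square)
    also have "\<dots> < q'^2" unfolding q_def q'_def using lt
      by (simp add: power2_eq_square algebra_simps)
    finally show ?thesis using A Bq unfolding q'_def
      by (smt (verit) power2_less_imp_less)
  qed
  have "1 - q' / (2 * sqrt (q x)) < 0" using key q0 by (simp add: field_simps)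
  hence "(1 - q' / (2 * sqrt (q x))) / (2*b^2) < 0" using B(1) by (simp add: divide_neg_pos)
  with dT show ?thesis by blast
qed

lemma calT_dec:
  assumes c: "0 < c" and "lam_plus c < x" "x < y"
  shows "calT c y < calT c x"
proof (rule DERIV_neg_imp_decreasing[OF assms(3)])
  fix z assume "x \<le> z" "z \<le> y"
  hence "lam_plus c < z" using assms(2) by linarith
  thus "\<exists>y. (calT c has_real_derivative y) (at z) \<and> y < 0" using calT_deriv[OF c] by blast
qed


lemma calT_inj_lt:
  assumes "0 < c" "lam_plus c < x" "lam_plus c < y" "calT c x < calT c y"
  shows "y < x"
proof (rule ccontr)
  assume "\<not> y < x"
  hence "x = y \<or> x < y" by auto
  thus False
  proof
    assume "x = y" thus False using assms(4) by simp
  next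
    assume "x < y" thus False using calT_dec[OF assms(1,2)] assms(4) by (meson less_asym)
  qed
qed

lemma calT_inj:
  assumes "0 < c" "lam_plus c < x" "lam_plus c < y" "calT c x = calT c y"
  shows "x = y"
proof (cases x y rule: linorder_cases)
  case less
  then show ?thesis using calT_dec[OF assms(1,2) less] assms(4) by simp
next
  case greater
  then show ?thesis using calT_dec[OF assms(1,3) greater] assms(4) by simp
qed simp

lemma d_sq:
  assumes c: "0 < c" and "c powr (-1/4) < e"
  shows "1 / sqrt c < e^2"
proof -
  have p0: "0 < c powr (-1/4)" using c by simp
  have "(c powr (-1/4))^2 = c powr (-1/2)"
    by (simp add: power2_eq_square powr_add[symmetric])
  also have "\<dots> = 1 / sqrt c" using c
    by (simp add: powr_minus_divide powr_half_sqrt)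
  finally have e: "(c powr (-1/4))^2 = 1 / sqrt c" .
  have "(c powr (-1/4))^2 < e^2" using p0 assms(2)
    by (intro power_strict_mono) auto
  with e show ?thesis by simp
qed

lemma pfun_eq:
  assumes "0 < c" "e \<noteq> 0"
  shows "pfun c e = e^2 + 1 + (1/sqrt c)^2 + (1/sqrt c)^2 / e^2"
  using assms by (simp add: pfun_def power_divide field_simps)

theorem lemma4p6:
  fixes c :: real and s :: nat and d :: "nat \<Rightarrow> real"
  assumes c_pos: "0 < c"
    and s_pos: "1 \<le> s"
    and d_dec: "\<And>i j. 1 \<le> i \<Longrightarrow> i < j \<Longrightarrow> j \<le> s \<Longrightarrow> d j < d i"
    and d_low: "\<And>i. 1 \<le> i \<Longrightarrow> i \<le> s \<Longrightarrow> c powr (-1/4) < d i"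
  shows "{x. lam_plus c < x \<and> Ts c d s x = 0} = (\<lambda>i. pfun c (d i)) ` {1..s}
         \<and> card ((\<lambda>i. pfun c (d i)) ` {1..s}) = s
         \<and> (\<exists>xs :: nat \<Rightarrow> real.
               {x. lam_plus c < x \<and> (Ts c d s has_real_derivative 0) (at x)} = xs ` {1..<s}
             \<and> (\<forall>i\<in>{1..<s}. pfun c (d (Suc i)) < xs i \<and> xs i < pfun c (d i)))
         \<and> (\<forall>x y. lam_plus c < x \<longrightarrow> x < y \<longrightarrow> calT c y < calT c x)"
proof -
  define b where "b = 1 / sqrt c"
  note B = basics[OF c_pos, folded b_def]
  define tt where "tt i = 1 / (d i)^2" for i
  define p where "p i = pfun c (d i)" for i
  have dsq: "b < (d i)^2" if "i \<in> {1..s}" for i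
    using d_sq[OF c_pos d_low[of i]] that b_def by auto
  have dpos: "0 < d i" if "i \<in> {1..s}" for i
  proof -
    have "0 < c powr (-1/4)" using c_pos by simp
    moreover have "c powr (-1/4) < d i" using d_low[of i] that by auto
    ultimately show ?thesis by linarith
  qed
  have Tp: "calT c (p i) = tt i \<and> lam_plus c < p i" if "i \<in> {1..s}" for i
  proof -
    have "p i = (d i)^2 + 1 + b^2 + b^2/(d i)^2"
      unfolding p_def b_def using pfun_eq[OF c_pos] dpos[OF that] by simp
    thus ?thesis using T_at[OF c_pos, of "(d i)^2"] dsq[OF that] unfolding tt_def b_def by simp
  qed
  have tt_pos: "0 < tt i" if "i \<in> {1..s}" for i using dpos[OF that] tt_def by simp
  have tt_lt: "tt i < 1/b" if "i \<in> {1..s}" for i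
    using dsq[OF that] B(1) unfolding tt_def by (intro divide_strict_left_mono mult_pos_pos) auto
  have tt_mono: "tt i < tt j" if "1 \<le> i" "i < j" "j \<le> s" for i j
  proof -
    have "d j < d i" using d_dec[OF that] .
    moreover have "0 < d j" using dpos[of j] that by simp
    ultimately have "(d j)^2 < (d i)^2" by (intro power_strict_mono) auto
    thus ?thesis unfolding tt_def using \<open>0 < d j\<close> by (intro divide_strict_left_mono mult_pos_pos) auto
  qed
  have tt_le: "tt i \<le> tt j" if "1 \<le> i" "i \<le> j" "j \<le> s" for i j
    using tt_mono[of i j] that by (cases "i = j") auto
  have dec: "\<forall>x y. lam_plus c < x \<longrightarrow> x < y \<longrightarrow> calT c y < calT c x"
    using calT_dec[OF c_pos] by blast
  have P1: "{x. lam_plus c < x \<and> Ts c d s x = 0} = p ` {1..s}"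
  proof (intro set_eqI iffI)
    fix x assume "x \<in> {x. lam_plus c < x \<and> Ts c d s x = 0}"
    then have x: "lam_plus c < x" and "Ts c d s x = 0" by auto
    then obtain i where i: "i \<in> {1..s}" "calT c x - 1/(d i)^2 = 0"
      unfolding Ts_def by auto
    hence "calT c x = calT c (p i)" using Tp tt_def by simp
    hence "x = p i" using calT_inj[OF c_pos x] Tp[OF i(1)] by blast
    thus "x \<in> p ` {1..s}" using i by blast
  next
    fix x assume "x \<in> p ` {1..s}"
    then obtain i where i: "i \<in> {1..s}" "x = p i" by blast
    have "Ts c d s x = 0" unfolding Ts_def
      using i Tp[OF i(1)] tt_def by (intro prod_zero) (auto intro!: bexI[of _ i])
    thus "x \<in> {x. lam_plus c < x \<and> Ts c d s x = 0}" using Tp[OF i(1)] i by auto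
  qed
  have p_mono: "p j < p i" if "1 \<le> i" "i < j" "j \<le> s" for i j
    using calT_inj_lt[OF c_pos, of "p i" "p j"] Tp[of i] Tp[of j] tt_mono[OF that] that by auto
  have P2: "card (p ` {1..s}) = s"
  proof -
    have "inj_on p {1..s}"
    proof (rule inj_onI)
      fix i j assume "i \<in> {1..s}" "j \<in> {1..s}" "p i = p j"
      thus "i = j" using p_mono[of i j] p_mono[of j i]
        by (cases i j rule: linorder_cases) auto
    qed
    thus ?thesis by (simp add: card_image)
  qed
  define P where "P = (\<Prod>i\<in>{1..s}. [:- tt i, 1:])"
  have polyP: "poly P z = (\<Prod>i\<in>{1..s}. z - tt i)" for z
    unfolding P_def poly_prod by simp
  have TsP: "Ts c d s x = poly P (calT c x)" for x
    unfolding polyP Ts_def tt_def ..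
  have degP: "degree P = s" unfolding P_def
    by (subst degree_prod_sum_eq) auto
  have P'0: "pderiv P \<noteq> 0" using degP s_pos by (simp add: pderiv_eq_0_iff)
  have degP': "degree (pderiv P) = s - 1" using degP degree_pderiv[of P] by simp
  define R where "R = {z. poly (pderiv P) z = 0}"
  have Rfin: "finite R" unfolding R_def using poly_roots_finite[OF P'0] .
  have Rcard: "card R \<le> s - 1" unfolding R_def using card_poly_roots_bound[OF P'0] degP' by simp
  have Pz: "poly P (tt i) = 0" if "i \<in> {1..s}" for i
    unfolding polyP using that by (intro prod_zero) (auto intro!: bexI[of _ i])
  have rolle: "\<exists>z. tt i < z \<and> z < tt (Suc i) \<and> poly (pderiv P) z = 0" if "i \<in> {1..<s}" for i
  proof -
    have lt: "tt i < tt (Suc i)" using that tt_mono by auto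
    have "\<exists>z. tt i < z \<and> z < tt (Suc i) \<and> (\<lambda>v. poly (pderiv P) z * v) = (\<lambda>v. 0)"
      apply (rule Rolle_deriv[OF lt, where f = "poly P"])
      using Pz that apply simp
       apply (intro continuous_intros)
      using poly_DERIV unfolding has_field_derivative_def by blast
    then obtain z where "tt i < z" "z < tt (Suc i)" "(\<lambda>v. poly (pderiv P) z * v) = (\<lambda>v. 0)" by blast
    moreover from this(3) have "poly (pderiv P) z = 0" by (metis mult_1_right)
    ultimately show ?thesis by blast
  qed
  define r where "r i = (SOME z. tt i < z \<and> z < tt (Suc i) \<and> poly (pderiv P) z = 0)" for i
  have r: "tt i < r i \<and> r i < tt (Suc i) \<and> poly (pderiv P) (r i) = 0" if "i \<in> {1..<s}" for i
    unfolding r_def using someI_ex[OF rolle[OF that]] .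
  have r_inj: "inj_on r {1..<s}"
  proof (rule inj_onI)
    have rm: "r i < r j" if "i \<in> {1..<s}" "j \<in> {1..<s}" "i < j" for i j
    proof -
      have "r i < tt (Suc i)" using r that by blast
      also have "\<dots> \<le> tt j" using tt_le that by auto
      also have "\<dots> < r j" using r that by blast
      finally show ?thesis .
    qed
    fix i j assume "i \<in> {1..<s}" "j \<in> {1..<s}" "r i = r j"
    thus "i = j" using rm[of i j] rm[of j i] by (cases i j rule: linorder_cases) auto
  qed
  have RR: "R = r ` {1..<s}"
  proof -
    have sub: "r ` {1..<s} \<subseteq> R" using r R_def by auto
    have "card (r ` {1..<s}) = s - 1" using r_inj by (simp add: card_image)
    hence "card R \<le> card (r ` {1..<s})" using Rcard by simp
    thus ?thesis using card_subset_eq[OF Rfin sub] card_mono[OF Rfin sub] by simp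
  qed
  have r_rng: "0 < r i \<and> r i < 1/b" if "i \<in> {1..<s}" for i
  proof -
    have "tt 1 \<le> tt i" using tt_le that by auto
    moreover have "tt (Suc i) \<le> tt s" using tt_le that by auto
    moreover have "0 < tt 1" "tt s < 1/b" using tt_pos tt_lt s_pos by auto
    ultimately show ?thesis using r[OF that] by auto
  qed
  define xs where "xs i = 1/r i + 1 + b^2 + b^2/(1/r i)" for i
  have Txs: "calT c (xs i) = r i \<and> lam_plus c < xs i" if "i \<in> {1..<s}" for i
  proof -
    have "1 / sqrt c < 1 / r i" using r_rng[OF that] B(1) b_def by (simp add: field_simps)
    thus ?thesis using T_at[OF c_pos, of "1/r i"] unfolding xs_def b_def by simp
  qed
  have ord: "\<forall>i\<in>{1..<s}. p (Suc i) < xs i \<and> xs i < p i"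
  proof
    fix i assume i: "i \<in> {1..<s}"
    have "p (Suc i) < xs i"
      using calT_inj_lt[OF c_pos, of "xs i" "p (Suc i)"] Txs[OF i] Tp[of "Suc i"] r[OF i] i by auto
    moreover have "xs i < p i"
      using calT_inj_lt[OF c_pos, of "p i" "xs i"] Txs[OF i] Tp[of i] r[OF i] i by auto
    ultimately show "p (Suc i) < xs i \<and> xs i < p i" ..
  qed
  have P3: "{x. lam_plus c < x \<and> (Ts c d s has_real_derivative 0) (at x)} = xs ` {1..<s}"
  proof (intro set_eqI)
    fix x
    show "x \<in> {x. lam_plus c < x \<and> (Ts c d s has_real_derivative 0) (at x)} \<longleftrightarrow> x \<in> xs ` {1..<s}"
    proof (cases "lam_plus c < x")
      case False
      thus ?thesis using Txs by auto
    next
      case x: True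
      obtain y where y: "(calT c has_real_derivative y) (at x)" "y < 0"
        using calT_deriv[OF c_pos x] by blast
      have eqf: "Ts c d s = (\<lambda>x. poly P (calT c x))" using TsP by auto
      have D: "(Ts c d s has_real_derivative poly (pderiv P) (calT c x) * y) (at x)"
        unfolding eqf using DERIV_chain2[OF poly_DERIV y(1)] .
      have "(Ts c d s has_real_derivative 0) (at x) \<longleftrightarrow> poly (pderiv P) (calT c x) = 0"
      proof
        assume "(Ts c d s has_real_derivative 0) (at x)"
        hence "poly (pderiv P) (calT c x) * y = 0" using DERIV_unique[OF D] by simp
        thus "poly (pderiv P) (calT c x) = 0" using y(2) by simp
      next
        assume "poly (pderiv P) (calT c x) = 0"
        thus "(Ts c d s has_real_derivative 0) (at x)" using D by simp
      qed
      also have "\<dots> \<longleftrightarrow> calT c x \<in> r ` {1..<s}" using RR R_def by auto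
      also have "\<dots> \<longleftrightarrow> x \<in> xs ` {1..<s}"
      proof
        assume "calT c x \<in> r ` {1..<s}"
        then obtain i where i: "i \<in> {1..<s}" "calT c x = r i" by blast
        hence "x = xs i" using calT_inj[OF c_pos x, of "xs i"] Txs[OF i(1)] by simp
        thus "x \<in> xs ` {1..<s}" using i by blast
      next
        assume "x \<in> xs ` {1..<s}"
        then obtain i where "i \<in> {1..<s}" "x = xs i" by blast
        thus "calT c x \<in> r ` {1..<s}" using Txs by auto
      qed
      finally show ?thesis using x by simp
    qed
  qed
  show ?thesis using P1 P2 P3 ord dec unfolding p_def by blast
qed

end
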